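(* Let $P$ be a set of $n$ points in the plane in general position with $n$ even, and fix a direction (horizontal axis) such that no two points of $P$ have the same horizontal coordinate. Let $C$ be a connected component of the underlying graph of $P$, with vertex set $V(C)$ of size $m$. Then a vertex $v\in V(C)$ is among the $m/2$ leftmost points of $V(C)$ if and only if it is among the $n/2$ leftmost points of $P$; equivalently, the $m/2$ leftmost points of $V(C)$ are among the $n/2$ leftmost points of $P$ and the $m/2$ rightmost points of $V(C)$ are among the $n/2$ rightmost points of $P$.
   Context: Points are in general position if no three are collinear. For a finite set $P$ of $n$ points in general position with $n$ even, a halving line of $P$ is a line through two points of $P$ that has exactly $(n-2)/2$ points of $P$ strictly on each side. The underlying graph of $P$ has vertex set $P$, and two points are adjacent if and only if the line through them is a halving line of $P$. "Leftmost" refers to ordering by the horizontal coordinate in the fixed direction. *)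

theory Defs
  imports "HOL-Analysis.Analysis"
begin

type_synonym pt = "real \<times> real"

definition orient :: "pt \<Rightarrow> pt \<Rightarrow> pt \<Rightarrow> real" where
  "orient p q r = (fst q - fst p) * (snd r - snd p) - (snd q - snd p) * (fst r - fst p)"

definition collinear3 :: "pt \<Rightarrow> pt \<Rightarrow> pt \<Rightarrow> bool" where
  "collinear3 p q r \<longleftrightarrow> orient p q r = 0"

definition general_position :: "pt set \<Rightarrow> bool" where
  "general_position P \<longleftrightarrow>
     (\<forall>p\<in>P. \<forall>q\<in>P. \<forall>r\<in>P. p \<noteq> q \<and> q \<noteq> r \<and> p \<noteq> r \<longrightarrow> \<not> collinear3 p q r)"

definition halving_line :: "pt set \<Rightarrow> pt \<Rightarrow> pt \<Rightarrow> bool" where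
  "halving_line P p q \<longleftrightarrow> p \<in> P \<and> q \<in> P \<and> p \<noteq> q \<and>
     card {r\<in>P. orient p q r > 0} = (card P - 2) div 2 \<and>
     card {r\<in>P. orient p q r < 0} = (card P - 2) div 2"

definition adj :: "pt set \<Rightarrow> pt \<Rightarrow> pt \<Rightarrow> bool" where
  "adj P p q \<longleftrightarrow> halving_line P p q"

definition component :: "pt set \<Rightarrow> pt \<Rightarrow> pt set" where
  "component P v = {w \<in> P. (adj P)\<^sup>*\<^sup>* v w}"

text \<open>v is among the k leftmost points of S (x-coordinates distinct).\<close>
definition among_leftmost :: "nat \<Rightarrow> pt set \<Rightarrow> pt \<Rightarrow> bool" where
  "among_leftmost k S v \<longleftrightarrow> v \<in> S \<and> card {w\<in>S. fst w < fst v} < k"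

end

theory Submission imports Defs begin

definition slope :: "pt \<Rightarrow> pt \<Rightarrow> real" where
  "slope p r = (snd r - snd p) / (fst r - fst p)"

definition Bel :: "pt set \<Rightarrow> pt \<Rightarrow> pt \<Rightarrow> pt set" where
  "Bel P p q = {r\<in>P. snd r - snd p < slope p q * (fst r - fst p)}"

lemma orient_eq:
  assumes "fst q \<noteq> fst p"
  shows "orient p q r = (fst q - fst p) * ((snd r - snd p) - slope p q * (fst r - fst p))"
  using assms unfolding orient_def slope_def by (simp add: field_simps)

lemma slope_mult: "fst r \<noteq> fst p \<Longrightarrow> snd r - snd p = slope p r * (fst r - fst p)"
  unfolding slope_def by simp

lemma slope_inj:
  assumes gp: "general_position P" and p: "p \<in> P"
    and dx: "\<forall>p\<in>P. \<forall>q\<in>P. p \<noteq> q \<longrightarrow> fst p \<noteq> fst q"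
  shows "inj_on (slope p) (P - {p})"
proof (rule inj_onI, rule ccontr)
  fix r r' assume r: "r \<in> P - {p}" and r': "r' \<in> P - {p}" and eq: "slope p r = slope p r'"
    and ne: "r \<noteq> r'"
  have "fst r \<noteq> fst p" "fst r' \<noteq> fst p" using r r' p dx by auto
  then have e1: "snd r - snd p = slope p r' * (fst r - fst p)"
    and e2: "snd r' - snd p = slope p r' * (fst r' - fst p)"
    using slope_mult[of r p] slope_mult[of r' p] eq by auto
  have "orient p r r' = (fst r - fst p) * (slope p r' * (fst r' - fst p)) - (slope p r' * (fst r - fst p)) * (fst r' - fst p)"
    by (simp only: orient_def e1 e2)
  then have "orient p r r' = 0" by (simp add: algebra_simps)
  then show False using gp p r r' ne unfolding general_position_def collinear3_def by auto
qed

lemma Bel_char: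
  assumes "r \<in> P" "fst r \<noteq> fst p"
  shows "r \<in> Bel P p q \<longleftrightarrow> (fst r < fst p \<and> slope p r > slope p q) \<or> (fst r > fst p \<and> slope p r < slope p q)"
proof -
  have "r \<in> Bel P p q \<longleftrightarrow> slope p r * (fst r - fst p) < slope p q * (fst r - fst p)"
    unfolding Bel_def using assms slope_mult[of r p] by auto
  also have "\<dots> \<longleftrightarrow> (fst r < fst p \<and> slope p r > slope p q) \<or> (fst r > fst p \<and> slope p r < slope p q)"
    using assms(2) by (cases "fst r < fst p") (auto simp: mult_less_cancel_right)
  finally show ?thesis .
qed

lemma p_notin_Bel: "p \<notin> Bel P p q" unfolding Bel_def by auto
lemma q_notin_Bel: "fst q \<noteq> fst p \<Longrightarrow> q \<notin> Bel P p q" unfolding Bel_def using slope_mult[of q p] by auto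

lemma halving_iff:
  assumes fin: "finite P" and ev: "even (card P)" and gp: "general_position P"
    and p: "p \<in> P" and q: "q \<in> P" and pq: "p \<noteq> q" and dx: "fst p \<noteq> fst q"
  shows "halving_line P p q \<longleftrightarrow> card (Bel P p q) = (card P - 2) div 2"
proof -
  define Pos where "Pos = {r\<in>P. orient p q r > 0}"
  define Neg where "Neg = {r\<in>P. orient p q r < 0}"
  have nz: "r \<in> P - {p, q} \<Longrightarrow> orient p q r \<noteq> 0" for r
    using gp p q pq unfolding general_position_def collinear3_def by auto
  have un: "Pos \<union> Neg = P - {p,q}"
  proof
    show "Pos \<union> Neg \<subseteq> P - {p,q}" unfolding Pos_def Neg_def by (auto simp: orient_def)
    show "P - {p,q} \<subseteq> Pos \<union> Neg" using nz unfolding Pos_def Neg_def by (force simp: linorder_neq_iff)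
  qed
  have dj: "Pos \<inter> Neg = {}" unfolding Pos_def Neg_def by auto
  have c2: "card P \<ge> 2" using p q pq fin
    by (metis card_2_iff card_mono empty_subsetI insert_subset)
  have "card (P - {p,q}) = card P - 2" using p q pq fin by (simp add: card_Diff_subset)
  then have sum: "card Pos + card Neg = card P - 2"
    using un dj fin unfolding Pos_def Neg_def by (metis (no_types, lifting) card_Un_disjoint finite_Un finite_subset Diff_subset)
  have BelE: "Bel P p q = Pos \<or> Bel P p q = Neg"
  proof (cases "fst q > fst p")
    case True
    then have "Bel P p q = Neg" unfolding Bel_def Neg_def using orient_eq[of q p] dx
      by (auto simp: mult_less_0_iff)
    then show ?thesis by simp
  next
    case False
    then have "fst q < fst p" using dx by auto
    then have "Bel P p q = Pos" unfolding Bel_def Pos_def using orient_eq[of q p] dx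
      by (auto simp: zero_less_mult_iff)
    then show ?thesis by simp
  qed
  have "halving_line P p q \<longleftrightarrow> card Pos = (card P - 2) div 2 \<and> card Neg = (card P - 2) div 2"
    unfolding halving_line_def Pos_def Neg_def using p q pq by auto
  also have "\<dots> \<longleftrightarrow> card (Bel P p q) = (card P - 2) div 2"
  proof -
    obtain k where k: "card P = 2*k" using ev by (auto elim!: evenE)
    have h: "(card P - 2) div 2 = k - 1" using k by presburger
    show ?thesis using BelE sum c2 unfolding h using k by auto
  qed
  finally show ?thesis .
qed


lemma telescope:
  fixes h :: "'a \<Rightarrow> real" and \<Phi> :: "'a set \<Rightarrow> int"
  assumes "finite S" "inj_on h S"
  shows "(\<Sum>q\<in>S. \<Phi> {r\<in>S. h r \<le> h q} - \<Phi> {r\<in>S. h r < h q}) = \<Phi> S - \<Phi> {}"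
  using assms
proof (induction "card S" arbitrary: S)
  case 0
  then show ?case by simp
next
  case (Suc n)
  then have ne: "S \<noteq> {}" by auto
  have "Max (h ` S) \<in> h ` S" using Suc.prems ne by simp
  then obtain m where m: "m \<in> S" "h m = Max (h ` S)" by auto
  have mx: "r \<in> S \<Longrightarrow> h r \<le> h m" for r using m Suc.prems by simp
  define S' where "S' = S - {m}"
  have S'fin: "finite S'" "inj_on h S'" "n = card S'" using Suc S'_def m
    by (auto intro: inj_on_subset)
  have lt: "q \<in> S' \<Longrightarrow> h q < h m" for q
    using mx[of q] Suc.prems(2) m(1) unfolding S'_def inj_on_def
    by (metis DiffE insertI1 order_le_imp_less_or_eq)
  have e1: "q \<in> S' \<Longrightarrow> {r\<in>S. h r \<le> h q} = {r\<in>S'. h r \<le> h q}" for q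
    using lt[of q] unfolding S'_def by auto
  have e2: "q \<in> S' \<Longrightarrow> {r\<in>S. h r < h q} = {r\<in>S'. h r < h q}" for q
    using lt[of q] unfolding S'_def by auto
  have e3: "{r\<in>S. h r \<le> h m} = S" using mx by auto
  have e4: "{r\<in>S. h r < h m} = S'" using mx lt unfolding S'_def by auto
  have "S = insert m S'" using m S'_def by auto
  then have "(\<Sum>q\<in>S. \<Phi> {r\<in>S. h r \<le> h q} - \<Phi> {r\<in>S. h r < h q})
     = (\<Phi> S - \<Phi> S') + (\<Sum>q\<in>S'. \<Phi> {r\<in>S. h r \<le> h q} - \<Phi> {r\<in>S. h r < h q})"
    using sum.remove[OF Suc.prems(1) m(1), of "\<lambda>q. \<Phi> {r\<in>S. h r \<le> h q} - \<Phi> {r\<in>S. h r < h q}"] e3 e4 S'_def by simp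
  also have "(\<Sum>q\<in>S'. \<Phi> {r\<in>S. h r \<le> h q} - \<Phi> {r\<in>S. h r < h q})
      = (\<Sum>q\<in>S'. \<Phi> {r\<in>S'. h r \<le> h q} - \<Phi> {r\<in>S'. h r < h q})"
    using e1 e2 by (intro sum.cong) auto
  also have "\<dots> = \<Phi> S' - \<Phi> {}" using Suc.hyps S'fin by blast
  finally show ?case by simp
qed

lemma point_balance:
  assumes fin: "finite P" and ev: "even (card P)" and gp: "general_position P"
    and dx: "\<forall>p\<in>P. \<forall>q\<in>P. p \<noteq> q \<longrightarrow> fst p \<noteq> fst q"
    and p: "p \<in> P"
  shows "int (card {q\<in>P. adj P p q \<and> fst p < fst q}) - int (card {q\<in>P. adj P p q \<and> fst q < fst p})
     = (if among_leftmost (card P div 2) P p then 1 else -1)"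
proof -
  define n where "n = card P"
  define S where "S = P - {p}"
  define h where "h = slope p"
  define xL where "xL = {r\<in>S. fst r < fst p}"
  define xR where "xR = {r\<in>S. fst p < fst r}"
  define \<Phi> :: "pt set \<Rightarrow> int" where
    "\<Phi> A = (if n div 2 \<le> card ((xL - A) \<union> (xR \<inter> A)) then 1 else 0)" for A
  have Sfin: "finite S" using fin S_def by auto
  have inj: "inj_on h S" using slope_inj[OF gp p dx] S_def h_def by simp
  have dxS: "r \<in> S \<Longrightarrow> fst r \<noteq> fst p" for r using dx p S_def by auto
  have n2: "n \<ge> 2"
  proof -
    have "n \<ge> 1" using p fin n_def by (metis card_0_eq empty_iff less_one not_le)
    then show ?thesis using ev n_def by presburger
  qed
  have tel: "(\<Sum>q\<in>S. \<Phi> {r\<in>S. h r \<le> h q} - \<Phi> {r\<in>S. h r < h q}) = \<Phi> S - \<Phi> {}"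
    by (rule telescope[OF Sfin inj])
  have tm: "\<Phi> {r\<in>S. h r \<le> h q} - \<Phi> {r\<in>S. h r < h q}
      = of_bool (adj P p q \<and> fst p < fst q) - of_bool (adj P p q \<and> fst q < fst p)"
    if q: "q \<in> S" for q
  proof -
    have qP: "q \<in> P" "q \<noteq> p" using q S_def by auto
    have adjq: "adj P p q \<longleftrightarrow> card (Bel P p q) = (n - 2) div 2"
      unfolding adj_def n_def using halving_iff[OF fin ev gp p qP(1)] qP dxS[OF q] by auto
    have bc: "r \<in> S \<Longrightarrow> r \<in> Bel P p q \<longleftrightarrow> (r \<in> xL \<and> h r > h q) \<or> (r \<in> xR \<and> h r < h q)" for r
      using Bel_char[of r P p q] dxS unfolding xL_def xR_def h_def S_def by auto
    have BS: "Bel P p q \<subseteq> S" unfolding S_def using p_notin_Bel[of p P q] unfolding Bel_def by auto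
    have injq: "r \<in> S \<Longrightarrow> h r = h q \<Longrightarrow> r = q" for r using inj q unfolding inj_on_def by auto
    have xLR: "xL \<subseteq> S" "xR \<subseteq> S" unfolding xL_def xR_def by auto
    have E1: "(xL - {r\<in>S. h r \<le> h q}) \<union> (xR \<inter> {r\<in>S. h r \<le> h q}) = Bel P p q \<union> ({q} \<inter> xR)"
    proof (rule set_eqI)
      fix r show "r \<in> (xL - {r\<in>S. h r \<le> h q}) \<union> (xR \<inter> {r\<in>S. h r \<le> h q}) \<longleftrightarrow> r \<in> Bel P p q \<union> ({q} \<inter> xR)"
      proof (cases "r \<in> S")
        case True
        then show ?thesis using bc[OF True] injq[OF True] q by (cases "h r = h q") auto
      next
        case False
        then show ?thesis using BS xLR q by auto
      qed
    qed
    have E2: "(xL - {r\<in>S. h r < h q}) \<union> (xR \<inter> {r\<in>S. h r < h q}) = Bel P p q \<union> ({q} \<inter> xL)"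
    proof (rule set_eqI)
      fix r show "r \<in> (xL - {r\<in>S. h r < h q}) \<union> (xR \<inter> {r\<in>S. h r < h q}) \<longleftrightarrow> r \<in> Bel P p q \<union> ({q} \<inter> xL)"
      proof (cases "r \<in> S")
        case True
        then show ?thesis using bc[OF True] injq[OF True] q by (cases "h r = h q") auto
      next
        case False
        then show ?thesis using BS xLR q by auto
      qed
    qed
    have qB: "q \<notin> Bel P p q" using q_notin_Bel dxS[OF q] by auto
    have Bfin: "finite (Bel P p q)" using BS Sfin finite_subset by auto
    have h2: "(n - 2) div 2 = n div 2 - 1" by presburger
    show ?thesis
    proof (cases "fst p < fst q")
      case True
      then have "q \<in> xR" "q \<notin> xL" using q unfolding xR_def xL_def by auto
      then have c1: "card ((xL - {r\<in>S. h r \<le> h q}) \<union> (xR \<inter> {r\<in>S. h r \<le> h q})) = card (Bel P p q) + 1"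
        and c2: "card ((xL - {r\<in>S. h r < h q}) \<union> (xR \<inter> {r\<in>S. h r < h q})) = card (Bel P p q)"
        unfolding E1 E2 using qB Bfin by auto
      show ?thesis unfolding \<Phi>_def c1 c2 adjq h2 using True n2 by auto
    next
      case False
      then have F: "fst q < fst p" using dxS[OF q] by auto
      then have "q \<in> xL" "q \<notin> xR" using q unfolding xR_def xL_def by auto
      then have c1: "card ((xL - {r\<in>S. h r \<le> h q}) \<union> (xR \<inter> {r\<in>S. h r \<le> h q})) = card (Bel P p q)"
        and c2: "card ((xL - {r\<in>S. h r < h q}) \<union> (xR \<inter> {r\<in>S. h r < h q})) = card (Bel P p q) + 1"
        unfolding E1 E2 using qB Bfin by auto
      show ?thesis unfolding \<Phi>_def c1 c2 adjq h2 using F n2 by auto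
    qed
  qed
  have lhs: "(\<Sum>q\<in>S. \<Phi> {r\<in>S. h r \<le> h q} - \<Phi> {r\<in>S. h r < h q})
     = int (card {q\<in>P. adj P p q \<and> fst p < fst q}) - int (card {q\<in>P. adj P p q \<and> fst q < fst p})"
  proof -
    have "(\<Sum>q\<in>S. \<Phi> {r\<in>S. h r \<le> h q} - \<Phi> {r\<in>S. h r < h q})
        = (\<Sum>q\<in>S. of_bool (adj P p q \<and> fst p < fst q) - of_bool (adj P p q \<and> fst q < fst p))"
      using tm by (intro sum.cong) auto
    also have "\<dots> = int (card (S \<inter> {q. adj P p q \<and> fst p < fst q})) - int (card (S \<inter> {q. adj P p q \<and> fst q < fst p}))"
      using Sfin by (simp add: sum_subtractf)
    also have "S \<inter> {q. adj P p q \<and> fst p < fst q} = {q\<in>P. adj P p q \<and> fst p < fst q}"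
      unfolding S_def by auto
    also have "S \<inter> {q. adj P p q \<and> fst q < fst p} = {q\<in>P. adj P p q \<and> fst q < fst p}"
      unfolding S_def by auto
    finally show ?thesis .
  qed
  have xLeq: "{w\<in>P. fst w < fst p} = xL" unfolding xL_def S_def by auto
  have SU: "S = xL \<union> xR" "xL \<inter> xR = {}" using dxS unfolding xL_def xR_def by (auto simp: linorder_neq_iff)
  have cS: "card S = n - 1" using S_def n_def p fin by simp
  have cLR: "card xL + card xR = n - 1" using SU cS Sfin
    by (metis card_Un_disjoint finite_Un)
  have PS: "\<Phi> S = (if n div 2 \<le> card xR then 1 else 0)" 
  proof -
    have "(xL - S) \<union> (xR \<inter> S) = xR" using SU by auto
    then show ?thesis unfolding \<Phi>_def by simp
  qed
  have P0: "\<Phi> {} = (if n div 2 \<le> card xL then 1 else 0)" unfolding \<Phi>_def by simp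
  have "\<Phi> S - \<Phi> {} = (if card xL < n div 2 then 1 else -1)"
    unfolding PS P0 using cLR n2 ev n_def by auto
  then show ?thesis using tel lhs xLeq unfolding among_leftmost_def n_def using p by auto
qed


lemma adj_sym: "adj P p q \<Longrightarrow> adj P q p"
proof -
  assume a: "adj P p q"
  have o: "orient q p r = - orient p q r" for r unfolding orient_def by (simp add: algebra_simps)
  have "{r\<in>P. orient q p r > 0} = {r\<in>P. orient p q r < 0}" "{r\<in>P. orient q p r < 0} = {r\<in>P. orient p q r > 0}"
    unfolding o by auto
  then show ?thesis using a unfolding adj_def halving_line_def by auto
qed

theorem mainTheorem7:
  fixes P :: "pt set" and v0 :: pt
  assumes "finite P"
    and "even (card P)"
    and "general_position P"
    and "\<forall>p\<in>P. \<forall>q\<in>P. p \<noteq> q \<longrightarrow> fst p \<noteq> fst q"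
    and "v0 \<in> P"
  shows "\<forall>v\<in>component P v0.
           among_leftmost (card (component P v0) div 2) (component P v0) v
             \<longleftrightarrow> among_leftmost (card P div 2) P v"
proof -
  note fin = assms(1) and ev = assms(2) and gp = assms(3) and dx = assms(4)
  define C where "C = component P v0"
  define Left where "Left = {v\<in>P. among_leftmost (card P div 2) P v}"
  have CP: "C \<subseteq> P" unfolding C_def component_def by auto
  have finC: "finite C" using CP fin finite_subset by auto
  have clos: "p \<in> C \<Longrightarrow> adj P p q \<Longrightarrow> q \<in> C" for p q
  proof -
    assume a: "p \<in> C" "adj P p q"
    then have "q \<in> P" unfolding adj_def halving_line_def by simp
    moreover have "(adj P)\<^sup>*\<^sup>* v0 p" using a(1) unfolding C_def component_def by simp
    then have "(adj P)\<^sup>*\<^sup>* v0 q" using a(2) by (rule rtranclp.rtrancl_into_rtrancl)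
    ultimately show "q \<in> C" unfolding C_def component_def by simp
  qed
  define NR where "NR p = {q\<in>P. adj P p q \<and> fst p < fst q}" for p
  define NL where "NL p = {q\<in>P. adj P p q \<and> fst q < fst p}" for p
  have finN: "finite (NR p)" "finite (NL p)" for p unfolding NR_def NL_def using fin by auto
  have swap: "(SIGMA p:C. NL p) = prod.swap ` (SIGMA p:C. NR p)"
  proof (rule set_eqI, rule iffI)
    fix x assume "x \<in> (SIGMA p:C. NL p)"
    then obtain a b where x: "x = (a,b)" "a \<in> C" "b \<in> P" "adj P a b" "fst b < fst a"
      unfolding NL_def by auto
    then have "(b,a) \<in> (SIGMA p:C. NR p)" unfolding NR_def using clos adj_sym CP by auto
    then show "x \<in> prod.swap ` (SIGMA p:C. NR p)" using x by force
  next
    fix x assume "x \<in> prod.swap ` (SIGMA p:C. NR p)"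
    then obtain a b where x: "x = (b,a)" "a \<in> C" "b \<in> P" "adj P a b" "fst a < fst b"
      unfolding NR_def by auto
    then show "x \<in> (SIGMA p:C. NL p)" unfolding NL_def using clos adj_sym CP by auto
  qed
  have "(\<Sum>p\<in>C. card (NL p)) = (\<Sum>p\<in>C. card (NR p))"
  proof -
    have "(\<Sum>p\<in>C. card (NL p)) = card (SIGMA p:C. NL p)" using finC finN by simp
    also have "\<dots> = card (SIGMA p:C. NR p)" unfolding swap
      by (rule card_image) (simp add: inj_on_def)
    also have "\<dots> = (\<Sum>p\<in>C. card (NR p))" using finC finN by simp
    finally show ?thesis .
  qed
  then have "(\<Sum>p\<in>C. int (card (NR p)) - int (card (NL p))) = 0"
    by (simp add: sum_subtractf flip: of_nat_sum)
  moreover have "(\<Sum>p\<in>C. int (card (NR p)) - int (card (NL p))) = (\<Sum>p\<in>C. if p \<in> Left then 1 else -1)"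
    using point_balance[OF fin ev gp dx] CP unfolding NR_def NL_def Left_def
    by (intro sum.cong) auto
  moreover have "(\<Sum>p\<in>C. if p \<in> Left then 1 else (-1::int)) = int (card (C \<inter> Left)) - int (card (C - Left))"
    using finC by (simp add: sum.If_cases Diff_eq)
  ultimately have bal: "card (C \<inter> Left) = card (C - Left)" by simp
  have cardC: "card C = card (C \<inter> Left) + card (C - Left)"
    using finC by (rule card_Int_Diff)
  have half: "card C div 2 = card (C \<inter> Left)" using cardC bal by simp
  have order: "fst v < fst w" if v: "v \<in> Left" and w: "w \<in> P - Left" for v w
  proof (rule ccontr)
    assume "\<not> fst v < fst w"
    moreover have "v \<noteq> w" using v w by auto
    ultimately have lt: "fst w < fst v" using dx v w unfolding Left_def by force
    have "{u\<in>P. fst u < fst w} \<subseteq> {u\<in>P. fst u < fst v}" using lt by auto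
    then have "card {u\<in>P. fst u < fst w} \<le> card {u\<in>P. fst u < fst v}"
      using fin by (intro card_mono) auto
    then show False using v w unfolding Left_def among_leftmost_def by auto
  qed
  show ?thesis unfolding C_def[symmetric]
  proof
    fix v assume vC: "v \<in> C"
    have vP: "v \<in> P" using vC CP by auto
    show "among_leftmost (card C div 2) C v \<longleftrightarrow> among_leftmost (card P div 2) P v"
    proof (cases "v \<in> Left")
      case True
      have "{w\<in>C. fst w < fst v} \<subseteq> (C \<inter> Left) - {v}"
        using order[of v] True CP by fastforce
      then have "card {w\<in>C. fst w < fst v} \<le> card ((C \<inter> Left) - {v})"
        using finC by (intro card_mono) auto
      also have "\<dots> < card (C \<inter> Left)" using True vC finC
        by (meson IntI card_Diff1_less finite_Int)
      finally have "among_leftmost (card C div 2) C v" unfolding half among_leftmost_def using vC by auto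
      moreover have "among_leftmost (card P div 2) P v" using True unfolding Left_def by auto
      ultimately show ?thesis by simp
    next
      case False
      have "C \<inter> Left \<subseteq> {w\<in>C. fst w < fst v}"
        using order[where w=v] False vP CP by blast
      then have "card (C \<inter> Left) \<le> card {w\<in>C. fst w < fst v}"
        using finC by (intro card_mono) auto
      then have "\<not> among_leftmost (card C div 2) C v" unfolding half among_leftmost_def by auto
      moreover have "\<not> among_leftmost (card P div 2) P v" using False vP unfolding Left_def by auto
      ultimately show ?thesis by simp
    qed
  qed
qed

end
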